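(* Let $(B,\mathfrak{m})$ be a deformation base, $X$ a vector space, $V\subseteq X$ a linear subspace and $M\subseteq B\widehat{\otimes}X$ a pseudoclosed $B$-submodule. Then for every integer $k\ge0$, $$\mathfrak{m}^kM\cap(\mathfrak{m}^kV+\mathfrak{m}^{k+1}X)\subseteq\mathfrak{m}^k\big(M\cap(V+\mathfrak{m}X)\big)+\mathfrak{m}^{k+1}M.$$
   Context: Deformation base: complete local Noetherian unital $\mathbb{C}$-algebra $B$ with maximal ideal $\mathfrak{m}$, $B/\mathfrak{m}=\mathbb{C}$. $B\widehat{\otimes}X=\varprojlim(B/\mathfrak{m}^k\otimes X)$. For a subspace $Y\subseteq B\widehat{\otimes}X$ (in particular for $Y=V$ or $Y=X$ viewed inside $B\widehat{\otimes}X$): $BY=\{\sum_ib_iy_i:y_i\in Y,b_i\in\mathfrak{m}^{k_i},k_i\to\infty\}$, and $\mathfrak{m}^kY$ is the same set with all $k_i\ge k$ (so $\mathfrak{m}^kX$ is the image of $\mathfrak{m}^k\widehat{\otimes}X$). $M$ is pseudoclosed if $BM\subseteq M$. *)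

theory Defs
  imports Complex_Main
begin

definition is_ideal :: "'b::comm_ring_1 set \<Rightarrow> bool" where
  "is_ideal I \<longleftrightarrow> 0 \<in> I \<and> (\<forall>a\<in>I. \<forall>b\<in>I. a + b \<in> I) \<and> (\<forall>r. \<forall>a\<in>I. r * a \<in> I)"

definition idl_span :: "'b::comm_ring_1 set \<Rightarrow> 'b set" where
  "idl_span S = {(\<Sum>j<n. r j * a j) | (n::nat) r a. \<forall>j<n. a j \<in> S}"

fun idpow :: "'b::comm_ring_1 set \<Rightarrow> nat \<Rightarrow> 'b set" where
  "idpow m 0 = UNIV"
| "idpow m (Suc k) = idl_span {a * b | a b. a \<in> m \<and> b \<in> idpow m k}"

definition noetherian_ring :: "'b::comm_ring_1 itself \<Rightarrow> bool" where
  "noetherian_ring _ \<longleftrightarrow> (\<forall>I::'b set. is_ideal I \<longrightarrow> (\<exists>F. finite F \<and> I = idl_span F))"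

definition deformation_base :: "(complex \<Rightarrow> 'b::comm_ring_1) \<Rightarrow> 'b set \<Rightarrow> bool" where
  "deformation_base emb m \<longleftrightarrow>
     \<comment> \<open>C-algebra structure\<close>
     emb 1 = 1 \<and> (\<forall>a c. emb (a + c) = emb a + emb c) \<and> (\<forall>a c. emb (a * c) = emb a * emb c)
     \<comment> \<open>m is a proper ideal, and B is local with maximal ideal m\<close>
   \<and> is_ideal m \<and> m \<noteq> UNIV \<and> (\<forall>b. b \<notin> m \<longrightarrow> (\<exists>u. b * u = 1))
     \<comment> \<open>residue field B/m = C\<close>
   \<and> (\<forall>b. \<exists>!c. b - emb c \<in> m)
     \<comment> \<open>Noetherian\<close>
   \<and> noetherian_ring TYPE('b)
     \<comment> \<open>m-adically separated and complete\<close>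
   \<and> (\<Inter>k. idpow m k) = {0}
   \<and> (\<forall>x::nat \<Rightarrow> 'b. (\<forall>k. \<exists>N. \<forall>n\<ge>N. x n - x N \<in> idpow m k)
         \<longrightarrow> (\<exists>l. \<forall>k. \<exists>N. \<forall>n\<ge>N. x n - l \<in> idpow m k))"

text \<open>X is modelled as the C-vector space with basis indexed by 'i
  (finitely supported functions 'i => complex).\<close>
definition Xsp :: "('i \<Rightarrow> complex) set" where
  "Xsp = {x. finite {i. x i \<noteq> 0}}"

definition lin_subspace :: "('i \<Rightarrow> complex) set \<Rightarrow> bool" where
  "lin_subspace V \<longleftrightarrow> V \<subseteq> Xsp \<and> (\<lambda>i. 0) \<in> V \<and> (\<forall>x\<in>V. \<forall>y\<in>V. (\<lambda>i. x i + y i) \<in> V)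
      \<and> (\<forall>c. \<forall>x\<in>V. (\<lambda>i. c * x i) \<in> V)"

text \<open>B completed-tensor X = lim (B/m^k tensor X): families in B such that for every k,
  only finitely many coordinates lie outside m^k.\<close>
definition BX :: "'b::comm_ring_1 set \<Rightarrow> ('i \<Rightarrow> 'b) set" where
  "BX m = {f. \<forall>k. finite {i. f i \<notin> idpow m k}}"

text \<open>X (and hence V) viewed inside B completed-tensor X.\<close>
definition incl :: "(complex \<Rightarrow> 'b) \<Rightarrow> ('i \<Rightarrow> complex) \<Rightarrow> 'i \<Rightarrow> 'b" where
  "incl emb x = (\<lambda>i. emb (x i))"

definition series_conv :: "'b::comm_ring_1 set \<Rightarrow> (nat \<Rightarrow> 'i \<Rightarrow> 'b) \<Rightarrow> ('i \<Rightarrow> 'b) \<Rightarrow> bool" where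
  "series_conv m u s \<longleftrightarrow> (\<forall>k. \<exists>N. \<forall>n\<ge>N. \<forall>i. s i - (\<Sum>j<n. u j i) \<in> idpow m k)"

text \<open>m^k Y = sums of b_n y_n, y_n in Y, b_n in m^(k_n), k_n >= k, k_n \<rightarrow> \<infinity>
  (finite sums are included by padding with zero coefficients).\<close>
definition mpow_mod :: "'b::comm_ring_1 set \<Rightarrow> nat \<Rightarrow> ('i \<Rightarrow> 'b) set \<Rightarrow> ('i \<Rightarrow> 'b) set" where
  "mpow_mod m k Y = {s. \<exists>(b::nat \<Rightarrow> 'b) y (kk::nat \<Rightarrow> nat).
      (\<forall>n. y n \<in> Y \<and> b n \<in> idpow m (kk n) \<and> k \<le> kk n)
    \<and> (\<forall>K. \<exists>N. \<forall>n\<ge>N. K \<le> kk n)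
    \<and> series_conv m (\<lambda>n i. b n * y n i) s}"

abbreviation Bspan :: "'b::comm_ring_1 set \<Rightarrow> ('i \<Rightarrow> 'b) set \<Rightarrow> ('i \<Rightarrow> 'b) set" where
  "Bspan m Y \<equiv> mpow_mod m 0 Y"

definition B_submodule :: "'b::comm_ring_1 set \<Rightarrow> ('i \<Rightarrow> 'b) set \<Rightarrow> bool" where
  "B_submodule m M \<longleftrightarrow> M \<subseteq> BX m \<and> (\<lambda>i. 0) \<in> M \<and> (\<forall>x\<in>M. \<forall>y\<in>M. (\<lambda>i. x i + y i) \<in> M)
      \<and> (\<forall>r. \<forall>x\<in>M. (\<lambda>i. r * x i) \<in> M)"

definition pseudoclosed :: "'b::comm_ring_1 set \<Rightarrow> ('i \<Rightarrow> 'b) set \<Rightarrow> bool" where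
  "pseudoclosed m M \<longleftrightarrow> Bspan m M \<subseteq> M"

definition setadd :: "('i \<Rightarrow> 'b::comm_ring_1) set \<Rightarrow> ('i \<Rightarrow> 'b) set \<Rightarrow> ('i \<Rightarrow> 'b) set" where
  "setadd A C = {(\<lambda>i. a i + c i) | a c. a \<in> A \<and> c \<in> C}"

end

theory Submission
  imports Defs "HOL-Library.Countable_Set"
begin

lemma ideal_0: "is_ideal I \<Longrightarrow> 0 \<in> I" by (simp add: is_ideal_def)
lemma ideal_add: "is_ideal I \<Longrightarrow> a \<in> I \<Longrightarrow> b \<in> I \<Longrightarrow> a + b \<in> I" by (simp add: is_ideal_def)
lemma ideal_mult: "is_ideal I \<Longrightarrow> a \<in> I \<Longrightarrow> r * a \<in> I" by (simp add: is_ideal_def)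
lemma ideal_mult2: "is_ideal I \<Longrightarrow> a \<in> I \<Longrightarrow> a * r \<in> I" by (metis ideal_mult mult.commute)
lemma ideal_neg: "is_ideal I \<Longrightarrow> a \<in> I \<Longrightarrow> - a \<in> I" using ideal_mult[of I a "-1"] by simp
lemma ideal_diff: "is_ideal I \<Longrightarrow> a \<in> I \<Longrightarrow> b \<in> I \<Longrightarrow> a - b \<in> I"
  by (metis diff_conv_add_uminus ideal_add ideal_neg)
lemma ideal_sum: assumes "is_ideal I" "\<And>x. x \<in> A \<Longrightarrow> f x \<in> I" shows "sum f A \<in> I"
  using assms(2)
proof (induction A rule: infinite_finite_induct)
  case (infinite A) then show ?case using assms(1) by (simp add: ideal_0)
next
  case empty then show ?case using assms(1) by (simp add: ideal_0)
next
  case (insert x F) then show ?case using assms(1) by (simp add: ideal_add)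
qed

lemma idl_spanI: "\<forall>j<(n::nat). a j \<in> S \<Longrightarrow> x = (\<Sum>j<n. r j * a j) \<Longrightarrow> x \<in> idl_span S"
  unfolding idl_span_def by blast

lemma idl_spanE: assumes "x \<in> idl_span S"
  obtains n r a where "x = (\<Sum>j<(n::nat). r j * a j)" "\<forall>j<n. a j \<in> S"
  using assms unfolding idl_span_def by blast

lemma idl_span_step:
  assumes "x \<in> idl_span S" "a \<in> S" shows "x + r * a \<in> idl_span S"
proof -
  obtain n rr aa where x: "x = (\<Sum>j<(n::nat). rr j * aa j)" and A: "\<forall>j<n. aa j \<in> S"
    using assms(1) by (elim idl_spanE) blast
  have e: "(\<Sum>j<n. (rr(n := r)) j * (aa(n := a)) j) = (\<Sum>j<n. rr j * aa j)"
    by (rule sum.cong) auto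
  have "x + r * a = (\<Sum>j<Suc n. (rr(n := r)) j * (aa(n := a)) j)"
    using x e by simp
  moreover have "\<forall>j<Suc n. (aa(n := a)) j \<in> S" using A assms(2) by (simp add: less_Suc_eq)
  ultimately show ?thesis by (intro idl_spanI[where r="rr(n := r)"]) auto
qed

lemma idl_span_0: "0 \<in> idl_span S"
proof -
  have "(0::'a) = (\<Sum>j<(0::nat). (\<lambda>_. 0) j * (\<lambda>_. 0) j)" by simp
  then show ?thesis by (intro idl_spanI) auto
qed

lemma idl_span_ideal: "is_ideal (idl_span S)"
proof -
  have add: "x + y \<in> idl_span S" if xs: "x \<in> idl_span S" and ys: "y \<in> idl_span S" for x y
  proof -
    obtain n rr aa where y: "y = (\<Sum>j<(n::nat). rr j * aa j)" and A: "\<forall>j<n. aa j \<in> S"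
      using ys by (elim idl_spanE) blast
    have "\<forall>N\<le>n. x + (\<Sum>j<N. rr j * aa j) \<in> idl_span S"
    proof (intro allI impI)
      fix N assume "N \<le> n" then show "x + (\<Sum>j<N. rr j * aa j) \<in> idl_span S"
      proof (induction N)
        case 0 then show ?case using xs by simp
      next
        case (Suc N)
        then have "x + (\<Sum>j<N. rr j * aa j) + rr N * aa N \<in> idl_span S"
          using A by (intro idl_span_step) auto
        then show ?case by (simp add: add.assoc)
      qed
    qed
    then show ?thesis using y by simp
  qed
  have mult: "r * x \<in> idl_span S" if xs: "x \<in> idl_span S" for x r
  proof -
    obtain n rr aa where x: "x = (\<Sum>j<(n::nat). rr j * aa j)" and A: "\<forall>j<n. aa j \<in> S"
      using xs by (elim idl_spanE) blast
    have "r * x = (\<Sum>j<n. (\<lambda>j. r * rr j) j * aa j)" using x by (simp add: sum_distrib_left mult.assoc)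
    then show ?thesis using A by (intro idl_spanI) auto
  qed
  show ?thesis unfolding is_ideal_def using add mult idl_span_0 by blast
qed

lemma idl_span_sub: "a \<in> S \<Longrightarrow> a \<in> idl_span S"
  using idl_span_step[OF idl_span_0, of a S 1] by simp

lemma idl_span_least: "is_ideal I \<Longrightarrow> S \<subseteq> I \<Longrightarrow> idl_span S \<subseteq> I"
  unfolding idl_span_def by (auto intro!: ideal_sum ideal_mult)

lemma idpow_ideal: "is_ideal (idpow m k)"
  by (cases k) (auto simp: is_ideal_def idl_span_ideal[unfolded is_ideal_def])

lemma idpow_mult: "a \<in> m \<Longrightarrow> b \<in> idpow m k \<Longrightarrow> a * b \<in> idpow m (Suc k)"
  by (auto intro!: idl_span_sub)

lemma idpow_Suc_sub: "idpow m (Suc k) \<subseteq> idpow m k"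
proof (induction k)
  case 0 then show ?case by simp
next
  case (Suc k)
  show ?case
    apply (subst idpow.simps(2))
    apply (rule idl_span_least[OF idpow_ideal])
    using Suc idpow_mult by blast
qed

lemma idpow_anti: "k \<le> K \<Longrightarrow> idpow m K \<subseteq> idpow m k"
proof (induction K rule: dec_induct)
  case base then show ?case by simp
next
  case (step n) then show ?case using idpow_Suc_sub by blast
qed

lemma m_sub_idpow1: "a \<in> m \<Longrightarrow> a \<in> idpow m 1"
  using idpow_mult[of a m 1 0] by simp


lemma coord_in:
  assumes "s \<in> mpow_mod m K Y" shows "s i \<in> idpow m K"
proof -
  obtain b y kk where b: "\<And>n. b n \<in> idpow m (kk n) \<and> K \<le> kk n"
    and c: "series_conv m (\<lambda>n i. b n * y n i) s"
    using assms unfolding mpow_mod_def by blast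
  obtain N where N: "\<And>n i. n \<ge> N \<Longrightarrow> s i - (\<Sum>j<n. b j * y j i) \<in> idpow m K"
    using c unfolding series_conv_def by blast
  have "b j * y j i \<in> idpow m K" for j
  proof -
    have "b j \<in> idpow m K" using b[of j] idpow_anti[of K "kk j" m] by blast
    then show ?thesis by (rule ideal_mult2[OF idpow_ideal])
  qed
  then have "(\<Sum>j<N. b j * y j i) \<in> idpow m K"
    by (intro ideal_sum[OF idpow_ideal])
  then have "s i - (\<Sum>j<N. b j * y j i) + (\<Sum>j<N. b j * y j i) \<in> idpow m K"
    using N by (intro ideal_add[OF idpow_ideal]) auto
  then show ?thesis by simp
qed

lemma sum_if_less:
  assumes "N \<le> (n::nat)" shows "(\<Sum>j<n. if j < N then f j else 0) = (\<Sum>j<N. f j)"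
proof -
  have "(\<Sum>j<n. if j < N then f j else 0) = sum f {j \<in> {..<n}. j < N}"
    by (rule sum.inter_filter[symmetric]) simp
  also have "{j \<in> {..<n}. j < N} = {..<N}" using assms by auto
  finally show ?thesis .
qed

lemma finite_in_mpow:
  assumes "\<And>j. j < (R::nat) \<Longrightarrow> b j \<in> idpow m k \<and> y j \<in> Y" "(\<lambda>i. 0) \<in> Y"
  shows "(\<lambda>i. \<Sum>j<R. b j * y j i) \<in> mpow_mod m k Y"
proof -
  define b' where "b' n = (if n < R then b n else 0)" for n
  define y' where "y' n = (if n < R then y n else (\<lambda>i. 0))" for n
  define kk where "kk n = (if n < R then k else k + n)" for n
  have 1: "\<forall>n. y' n \<in> Y \<and> b' n \<in> idpow m (kk n) \<and> k \<le> kk n"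
    using assms by (auto simp: y'_def b'_def kk_def ideal_0[OF idpow_ideal])
  have 2: "\<forall>K. \<exists>N. \<forall>n\<ge>N. K \<le> kk n"
  proof
    fix K show "\<exists>N. \<forall>n\<ge>N. K \<le> kk n" by (rule exI[of _ "max R K"]) (auto simp: kk_def)
  qed
  have 3: "series_conv m (\<lambda>n i. b' n * y' n i) (\<lambda>i. \<Sum>j<R. b j * y j i)"
    unfolding series_conv_def
  proof (intro allI exI[of _ R] impI)
    fix K n i assume "R \<le> n"
    have "(\<Sum>j<n. b' j * y' j i) = (\<Sum>j<n. if j < R then b j * y j i else 0)"
      by (rule sum.cong) (auto simp: b'_def y'_def)
    also have "\<dots> = (\<Sum>j<R. b j * y j i)" using \<open>R \<le> n\<close> by (rule sum_if_less)
    finally show "(\<Sum>j<R. b j * y j i) - (\<Sum>j<n. b' j * y' j i) \<in> idpow m K"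
      by (simp add: ideal_0[OF idpow_ideal])
  qed
  show ?thesis unfolding mpow_mod_def
    apply (rule CollectI)
    apply (rule exI[of _ b'], rule exI[of _ y'], rule exI[of _ kk])
    using 1 2 3 by simp
qed

lemma finite_set_in_mpow:
  assumes "finite F" "\<And>g. g \<in> F \<Longrightarrow> g \<in> idpow m k \<and> z g \<in> Y" "(\<lambda>i. 0) \<in> Y"
  shows "(\<lambda>i. \<Sum>g\<in>F. g * z g i) \<in> mpow_mod m k Y"
proof -
  obtain h where h: "bij_betw h {0..<card F} F" using ex_bij_betw_nat_finite[OF assms(1)] by blast
  have "(\<lambda>i. \<Sum>g\<in>F. g * z g i) = (\<lambda>i. \<Sum>j<card F. h j * z (h j) i)"
    using sum.reindex_bij_betw[OF h, of "\<lambda>g. g * z g _"] by (simp add: atLeast0LessThan)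
  also have "\<dots> \<in> mpow_mod m k Y"
    apply (rule finite_in_mpow[OF _ assms(3)])
  proof -
    fix j assume "j < card F"
    then have "h j \<in> F" using h by (auto simp: bij_betw_def)
    then show "h j \<in> idpow m k \<and> z (h j) \<in> Y" using assms(2) by blast
  qed
  finally show ?thesis .
qed

lemma choose_kk:
  assumes "\<And>n::nat. b n \<in> idpow m k0" "\<And>K. \<exists>N. \<forall>n\<ge>N. b n \<in> idpow m K"
  shows "\<exists>kk. (\<forall>n. b n \<in> idpow m (kk n) \<and> k0 \<le> kk n) \<and> (\<forall>K. \<exists>N. \<forall>n\<ge>N. K \<le> kk n)"
proof -
  define A where "A n = {K. K \<le> max k0 n \<and> b n \<in> idpow m K}" for n
  have fin: "finite (A n)" for n unfolding A_def by (rule finite_subset[of _ "{..max k0 n}"]) auto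
  have k0: "k0 \<in> A n" for n unfolding A_def using assms(1) by auto
  define kk where "kk n = Max (A n)" for n
  have "b n \<in> idpow m (kk n) \<and> k0 \<le> kk n" for n
  proof
    have "kk n \<in> A n" unfolding kk_def using fin k0 by (intro Max_in) auto
    then show "b n \<in> idpow m (kk n)" unfolding A_def by simp
    show "k0 \<le> kk n" unfolding kk_def using fin k0 by (intro Max_ge)
  qed
  moreover have "\<exists>N. \<forall>n\<ge>N. K \<le> kk n" for K
  proof -
    obtain N where N: "\<forall>n\<ge>N. b n \<in> idpow m K" using assms(2) by blast
    show ?thesis
    proof (intro exI[of _ "max N K"] allI impI)
      fix n assume "max N K \<le> n"
      then have "K \<in> A n" unfolding A_def using N by auto
      then show "K \<le> kk n" unfolding kk_def using fin by (intro Max_ge)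
    qed
  qed
  ultimately show ?thesis by blast
qed


definition spans :: "(complex \<Rightarrow> 'b::comm_ring_1) \<Rightarrow> 'b set \<Rightarrow> nat \<Rightarrow> 'b set \<Rightarrow> bool" where
  "spans emb m k F \<longleftrightarrow> finite F \<and> F \<subseteq> idpow m k \<and>
     (\<forall>b\<in>idpow m k. \<exists>c. b - (\<Sum>g\<in>F. emb (c g) * g) \<in> idpow m (Suc k))"

lemma emb_0: assumes "\<forall>a c. (emb :: complex \<Rightarrow> 'b::comm_ring_1) (a + c) = emb a + emb c" shows "emb 0 = 0"
proof -
  have "emb 0 = emb 0 + emb 0" using assms[rule_format, of 0 0] by simp
  then show ?thesis by simp
qed

lemma emb_diff: assumes "\<forall>a c. (emb :: complex \<Rightarrow> 'b::comm_ring_1) (a + c) = emb a + emb c"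
  shows "emb (a - c) = emb a - emb c"
proof -
  have "emb a = emb (a - c) + emb c" using assms[rule_format, of "a - c" c] by simp
  then show ?thesis by (simp add: algebra_simps)
qed

lemma emb_sum: assumes "\<forall>a c. (emb :: complex \<Rightarrow> 'b::comm_ring_1) (a + c) = emb a + emb c"
  shows "emb (sum f A) = (\<Sum>x\<in>A. emb (f x))"
  by (induction A rule: infinite_finite_induct) (auto simp: emb_0[OF assms] assms)

lemma spans_exists:
  assumes add: "\<forall>a c. (emb :: complex \<Rightarrow> 'b::comm_ring_1) (a + c) = emb a + emb c"
    and res: "\<forall>b. \<exists>c. b - emb c \<in> m"
    and noeth: "noetherian_ring TYPE('b)"
  shows "\<exists>F. spans emb m k F"
proof -
  obtain F0 where fin: "finite F0" and eq: "idpow m k = idl_span F0"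
    using noeth idpow_ideal unfolding noetherian_ring_def by blast
  have "\<exists>C. b - (\<Sum>g\<in>F0. emb (C g) * g) \<in> idpow m (Suc k)" if bk: "b \<in> idpow m k" for b
  proof -
    obtain n r a where b: "b = (\<Sum>j<(n::nat). r j * a j)" and A: "\<forall>j<n. a j \<in> F0"
      using bk eq by (auto elim: idl_spanE)
    have "\<forall>j. \<exists>cj. r j - emb cj \<in> m" using res by blast
    then obtain c where c: "\<And>j. r j - emb (c j) \<in> m" by metis
    define C where "C g = (\<Sum>j | j \<in> {..<n} \<and> a j = g. c j)" for g
    have "(\<Sum>g\<in>F0. emb (C g) * g) = (\<Sum>g\<in>F0. \<Sum>j | j \<in> {..<n} \<and> a j = g. emb (c j) * a j)"
    proof (rule sum.cong[OF refl])
      fix g assume "g \<in> F0"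
      have "emb (C g) * g = (\<Sum>j | j \<in> {..<n} \<and> a j = g. emb (c j)) * g"
        unfolding C_def by (simp add: emb_sum[OF add])
      also have "\<dots> = (\<Sum>j | j \<in> {..<n} \<and> a j = g. emb (c j) * a j)"
        by (simp add: sum_distrib_right)
      finally show "emb (C g) * g = (\<Sum>j | j \<in> {..<n} \<and> a j = g. emb (c j) * a j)" .
    qed
    also have "\<dots> = (\<Sum>j<n. emb (c j) * a j)"
      by (rule sum.group) (use fin A in auto)
    finally have e: "(\<Sum>g\<in>F0. emb (C g) * g) = (\<Sum>j<n. emb (c j) * a j)" .
    have "b - (\<Sum>g\<in>F0. emb (C g) * g) = (\<Sum>j<n. (r j - emb (c j)) * a j)"
      unfolding e b by (simp add: sum_subtractf algebra_simps)
    also have "\<dots> \<in> idpow m (Suc k)"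
    proof (rule ideal_sum[OF idpow_ideal])
      fix j assume "j \<in> {..<n}"
      then have "a j \<in> idpow m k" using A eq idl_span_sub by auto
      then show "(r j - emb (c j)) * a j \<in> idpow m (Suc k)" using c by (rule idpow_mult[rotated])
    qed
    finally show ?thesis by blast
  qed
  moreover have "F0 \<subseteq> idpow m k" using eq idl_span_sub by auto
  ultimately show ?thesis unfolding spans_def using fin by blast
qed

lemma spans_indep:
  assumes hom: "\<forall>a c. (emb :: complex \<Rightarrow> 'b::comm_ring_1) (a + c) = emb a + emb c"
      "\<forall>a c. emb (a * c) = emb a * emb c"
    and sp: "spans emb m k F" and min: "\<And>F'. spans emb m k F' \<Longrightarrow> card F \<le> card F'"
    and d: "(\<Sum>g\<in>F. emb (d g) * g) \<in> idpow m (Suc k)" and g0: "g0 \<in> F"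
  shows "d g0 = 0"
proof (rule ccontr)
  assume nz: "d g0 \<noteq> 0"
  have fin: "finite F" using sp unfolding spans_def by blast
  have "spans emb m k (F - {g0})"
    unfolding spans_def
  proof (intro conjI ballI)
    show "finite (F - {g0})" using fin by simp
    show "F - {g0} \<subseteq> idpow m k" using sp unfolding spans_def by blast
    fix b assume "b \<in> idpow m k"
    then obtain c where c: "b - (\<Sum>g\<in>F. emb (c g) * g) \<in> idpow m (Suc k)"
      using sp unfolding spans_def by blast
    define l where "l = c g0 / d g0"
    define c' where "c' g = c g - l * d g" for g
    have "(\<Sum>g\<in>F. emb (c' g) * g) = (\<Sum>g\<in>F. emb (c g) * g) - emb l * (\<Sum>g\<in>F. emb (d g) * g)"
      unfolding c'_def by (simp add: emb_diff[OF hom(1)] hom(2) sum_subtractf sum_distrib_left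
          algebra_simps)
    moreover have "(\<Sum>g\<in>F. emb (c' g) * g) = emb (c' g0) * g0 + (\<Sum>g\<in>F - {g0}. emb (c' g) * g)"
      using fin g0 by (simp add: sum.remove)
    moreover have "c' g0 = 0" unfolding c'_def l_def using nz by simp
    ultimately have "b - (\<Sum>g\<in>F - {g0}. emb (c' g) * g)
        = (b - (\<Sum>g\<in>F. emb (c g) * g)) + emb l * (\<Sum>g\<in>F. emb (d g) * g)"
      by (simp add: emb_0[OF hom(1)] algebra_simps)
    also have "\<dots> \<in> idpow m (Suc k)"
      using c d by (intro ideal_add[OF idpow_ideal] ideal_mult[OF idpow_ideal])
    finally show "\<exists>c. b - (\<Sum>g\<in>F - {g0}. emb (c g) * g) \<in> idpow m (Suc k)" by blast
  qed
  then have "card F \<le> card (F - {g0})" by (rule min)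
  moreover have "card (F - {g0}) < card F" using fin g0 by (metis card_Diff1_less)
  ultimately show False by simp
qed


lemma decomp:
  assumes sp: "spans emb m k F"
    and Y0: "(\<lambda>i. 0) \<in> Y" and Yadd: "\<And>x y. x \<in> Y \<Longrightarrow> y \<in> Y \<Longrightarrow> (\<lambda>i. x i + y i) \<in> Y"
    and Ysc: "\<And>c x. x \<in> Y \<Longrightarrow> (\<lambda>i. emb c * x i) \<in> Y"
    and s: "s \<in> mpow_mod m k Y"
  shows "\<exists>z. (\<forall>g. z g \<in> Y) \<and> (\<lambda>i. s i - (\<Sum>g\<in>F. g * z g i)) \<in> mpow_mod m (Suc k) Y"
proof -
  obtain b y kk where b: "\<And>n. y n \<in> Y \<and> b n \<in> idpow m (kk n) \<and> k \<le> kk n"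
    and kk: "\<And>K. \<exists>N. \<forall>n\<ge>N. K \<le> kk n"
    and c: "series_conv m (\<lambda>n i. b n * y n i) s"
    using s unfolding mpow_mod_def by blast
  obtain N0 where N0: "\<And>n. n \<ge> N0 \<Longrightarrow> Suc k \<le> kk n" using kk by blast
  have "\<forall>n. \<exists>cn. b n - (\<Sum>g\<in>F. emb (cn g) * g) \<in> idpow m (Suc k)"
  proof
    fix n
    have "b n \<in> idpow m k" using b[of n] idpow_anti[of k "kk n" m] by blast
    then show "\<exists>cn. b n - (\<Sum>g\<in>F. emb (cn g) * g) \<in> idpow m (Suc k)"
      using sp unfolding spans_def by blast
  qed
  then obtain cc where cc: "\<And>n. b n - (\<Sum>g\<in>F. emb (cc n g) * g) \<in> idpow m (Suc k)" by metis
  define z where "z g = (\<lambda>i. \<Sum>n<N0. emb (cc n g) * y n i)" for g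
  have zY: "z g \<in> Y" for g
  proof -
    have "(\<lambda>i. \<Sum>n<N. emb (cc n g) * y n i) \<in> Y" for N
    proof (induction N)
      case 0 then show ?case using Y0 by simp
    next
      case (Suc N)
      have "(\<lambda>i. (\<Sum>n<N. emb (cc n g) * y n i) + emb (cc N g) * y N i) \<in> Y"
        using Yadd[OF Suc Ysc[OF conjunct1[OF b[of N]]]] by simp
      then show ?case by simp
    qed
    then show ?thesis unfolding z_def .
  qed
  define X where "X n = (\<Sum>g\<in>F. emb (cc n g) * g)" for n
  define e where "e n = (if n < N0 then b n - X n else b n)" for n
  define kk' where "kk' n = (if n < N0 then Suc k else kk n)" for n
  have 1: "\<forall>n. y n \<in> Y \<and> e n \<in> idpow m (kk' n) \<and> Suc k \<le> kk' n"
    using b cc N0 by (auto simp: e_def kk'_def X_def not_less)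
  have 2: "\<forall>K. \<exists>N. \<forall>n\<ge>N. K \<le> kk' n"
  proof
    fix K obtain N where "\<forall>n\<ge>N. K \<le> kk n" using kk by blast
    then show "\<exists>N. \<forall>n\<ge>N. K \<le> kk' n"
      by (intro exI[of _ "max N N0"]) (auto simp: kk'_def)
  qed
  have zsum: "(\<Sum>g\<in>F. g * z g i) = (\<Sum>j<N0. X j * y j i)" for i
  proof -
    have "(\<Sum>g\<in>F. g * z g i) = (\<Sum>g\<in>F. \<Sum>j<N0. emb (cc j g) * g * y j i)"
      unfolding z_def by (simp add: sum_distrib_left algebra_simps)
    also have "\<dots> = (\<Sum>j<N0. \<Sum>g\<in>F. emb (cc j g) * g * y j i)" by (rule sum.swap)
    also have "\<dots> = (\<Sum>j<N0. X j * y j i)" unfolding X_def by (simp add: sum_distrib_right)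
    finally show ?thesis .
  qed
  have esum: "(\<Sum>j<n. e j * y j i) = (\<Sum>j<n. b j * y j i) - (\<Sum>j<N0. X j * y j i)"
    if "N0 \<le> n" for n i
  proof -
    have "(\<Sum>j<n. e j * y j i) = (\<Sum>j<n. b j * y j i - (if j < N0 then X j * y j i else 0))"
      by (rule sum.cong) (auto simp: e_def algebra_simps)
    also have "\<dots> = (\<Sum>j<n. b j * y j i) - (\<Sum>j<n. if j < N0 then X j * y j i else 0)"
      by (simp add: sum_subtractf)
    also have "\<dots> = (\<Sum>j<n. b j * y j i) - (\<Sum>j<N0. X j * y j i)"
      using that by (simp add: sum_if_less)
    finally show ?thesis .
  qed
  have 3: "series_conv m (\<lambda>n i. e n * y n i) (\<lambda>i. s i - (\<Sum>g\<in>F. g * z g i))"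
    unfolding series_conv_def
  proof
    fix K
    obtain N where N: "\<forall>n\<ge>N. \<forall>i. s i - (\<Sum>j<n. b j * y j i) \<in> idpow m K"
      using c unfolding series_conv_def by blast
    show "\<exists>N. \<forall>n\<ge>N. \<forall>i. s i - (\<Sum>g\<in>F. g * z g i) - (\<Sum>j<n. e j * y j i) \<in> idpow m K"
    proof (intro exI[of _ "max N N0"] allI impI)
      fix n i assume n: "max N N0 \<le> n"
      have "s i - (\<Sum>g\<in>F. g * z g i) - (\<Sum>j<n. e j * y j i) = s i - (\<Sum>j<n. b j * y j i)"
        using n by (simp add: zsum esum)
      moreover have "s i - (\<Sum>j<n. b j * y j i) \<in> idpow m K" using N n by simp
      ultimately show "s i - (\<Sum>g\<in>F. g * z g i) - (\<Sum>j<n. e j * y j i) \<in> idpow m K"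
        by metis
    qed
  qed
  have "(\<lambda>i. s i - (\<Sum>g\<in>F. g * z g i)) \<in> mpow_mod m (Suc k) Y"
    unfolding mpow_mod_def
    apply (rule CollectI)
    apply (rule exI[of _ e], rule exI[of _ y], rule exI[of _ kk'])
    using 1 2 3 by simp
  then show ?thesis using zY by blast
qed


lemma idpow_0[simp]: "0 \<in> idpow m k" by (rule ideal_0[OF idpow_ideal])

lemma zero_in_inclX: "emb 0 = 0 \<Longrightarrow> (\<lambda>i. 0) \<in> incl emb ` Xsp"
proof -
  assume e0: "emb 0 = 0"
  have "(\<lambda>i. 0) = incl emb (\<lambda>i. 0)" by (simp add: incl_def e0)
  moreover have "(\<lambda>i. 0::complex) \<in> Xsp" by (simp add: Xsp_def)
  ultimately show ?thesis by blast
qed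

lemma mX:
  fixes emb :: "complex \<Rightarrow> 'b::comm_ring_1" and f :: "'i \<Rightarrow> 'b"
  assumes e0: "emb 0 = 0" and e1: "emb 1 = 1"
    and sep: "(\<Inter>k. idpow m k) = {0}"
    and f: "f \<in> BX m" and fm: "\<And>i. f i \<in> idpow m 1"
  shows "f \<in> mpow_mod m 1 (incl emb ` Xsp)"
proof (cases "\<forall>i. f i = 0")
  case True
  then have "f = (\<lambda>i. \<Sum>j<(0::nat). (\<lambda>_. 0) j * (\<lambda>_. \<lambda>_. 0) j i)" by auto
  also have "\<dots> \<in> mpow_mod m 1 (incl emb ` Xsp)"
    by (rule finite_in_mpow) (auto intro: zero_in_inclX[of emb, OF e0])
  finally show ?thesis .
next
  case False
  define S where "S = {i. f i \<noteq> 0}"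
  have Sne: "S \<noteq> {}" using False S_def by auto
  define Bd where "Bd K = {i. f i \<notin> idpow m K}" for K
  have Bdfin: "finite (Bd K)" for K using f unfolding BX_def Bd_def by blast
  have BdS: "Bd K \<subseteq> S" for K unfolding Bd_def S_def by auto
  have "S \<subseteq> (\<Union>K. Bd K)"
  proof
    fix i assume "i \<in> S"
    then have "f i \<notin> (\<Inter>k. idpow m k)" using sep S_def by auto
    then show "i \<in> (\<Union>K. Bd K)" unfolding Bd_def by auto
  qed
  then have cS: "countable S"
    by (rule countable_subset) (auto intro: countable_finite Bdfin)
  define en where "en = from_nat_into S"
  have enS: "en n \<in> S" for n unfolding en_def using Sne by (rule from_nat_into)
  have ensurj: "\<exists>n. en n = i" if "i \<in> S" for i unfolding en_def using cS that by (rule from_nat_into_surj)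
  define fs where "fs n \<longleftrightarrow> en n \<notin> en ` {..<n}" for n
  define b where "b n = (if fs n then f (en n) else 0)" for n
  define y where "y n = incl emb (\<lambda>i. if i = en n then 1 else 0)" for n
  have yY: "y n \<in> incl emb ` Xsp" for n
  proof -
    have "{i. (if i = en n then 1 else 0) \<noteq> (0::complex)} \<subseteq> {en n}" by auto
    then have "(\<lambda>i. if i = en n then 1 else 0::complex) \<in> Xsp" unfolding Xsp_def
      using finite_subset by auto
    then show ?thesis unfolding y_def by blast
  qed
  have yval: "y n i = (if i = en n then 1 else 0)" for n i
    unfolding y_def incl_def by (simp add: e0 e1)
  have psum: "(\<Sum>j<n. b j * y j i) = (if i \<in> en ` {..<n} then f i else 0)" for n i
  proof (induction n)
    case 0 then show ?case by simp
  next
    case (Suc n)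
    have "(\<Sum>j<Suc n. b j * y j i) = (if i \<in> en ` {..<n} then f i else 0) + b n * y n i"
      using Suc by simp
    also have "\<dots> = (if i \<in> en ` {..<Suc n} then f i else 0)"
    proof (cases "i \<in> en ` {..<n}")
      case True
      then have "b n * y n i = 0" by (cases "en n = i") (auto simp: b_def fs_def yval)
      then show ?thesis using True by (simp add: lessThan_Suc)
    next
      case False
      show ?thesis
      proof (cases "en n = i")
        case True
        then have "fs n" using False unfolding fs_def by simp
        then show ?thesis using True False by (simp add: b_def yval lessThan_Suc)
      next
        case F2: False
        then show ?thesis using False by (simp add: yval lessThan_Suc)
      qed
    qed
    finally show ?case .
  qed
  have keyN: "\<exists>N. Bd K \<subseteq> en ` {..<N}" for K
  proof -
    define idx where "idx i = (SOME j. en j = i)" for i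
    have idx: "en (idx i) = i" if "i \<in> Bd K" for i
    proof -
      have "\<exists>j. en j = i" using ensurj BdS that by blast
      then show ?thesis unfolding idx_def by (rule someI_ex)
    qed
    obtain N where N: "idx ` Bd K \<subseteq> {..<N}" using finite_nat_bounded Bdfin by blast
    have "Bd K \<subseteq> en ` {..<N}"
    proof
      fix i assume i: "i \<in> Bd K"
      then have "idx i < N" using N by blast
      then show "i \<in> en ` {..<N}" using idx[OF i] by (metis imageI lessThan_iff)
    qed
    then show ?thesis by blast
  qed
  have bK: "\<exists>N. \<forall>n\<ge>N. b n \<in> idpow m K" for K
  proof -
    obtain N where N: "Bd K \<subseteq> en ` {..<N}" using keyN by blast
    have "b n \<in> idpow m K" if "n \<ge> N" for n
    proof (cases "fs n")
      case True
      then have "en n \<notin> en ` {..<N}" using that unfolding fs_def by auto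
      then have "en n \<notin> Bd K" using N by blast
      then show ?thesis using True unfolding b_def Bd_def by simp
    next
      case False then show ?thesis unfolding b_def by (simp add: ideal_0[OF idpow_ideal])
    qed
    then show ?thesis by blast
  qed
  have b1: "b n \<in> idpow m 1" for n unfolding b_def using fm[of "en n"] idpow_0[of m 1] by (simp del: idpow.simps)
  obtain kk where kk1: "\<forall>n. b n \<in> idpow m (kk n) \<and> 1 \<le> kk n" and kk2: "\<forall>K. \<exists>N. \<forall>n\<ge>N. K \<le> kk n"
    using choose_kk[of b m 1, OF b1 bK] by blast
  have 3: "series_conv m (\<lambda>n i. b n * y n i) f"
    unfolding series_conv_def
  proof
    fix K
    obtain N where N: "Bd K \<subseteq> en ` {..<N}" using keyN by blast
    show "\<exists>N. \<forall>n\<ge>N. \<forall>i. f i - (\<Sum>j<n. b j * y j i) \<in> idpow m K"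
    proof (intro exI[of _ N] allI impI)
      fix n i assume n: "N \<le> n"
      show "f i - (\<Sum>j<n. b j * y j i) \<in> idpow m K"
      proof (cases "i \<in> en ` {..<n}")
        case True then show ?thesis by (simp add: psum ideal_0[OF idpow_ideal])
      next
        case False
        then have "i \<notin> en ` {..<N}" using n by auto
        then have "i \<notin> Bd K" using N by blast
        then show ?thesis using False by (simp add: psum Bd_def)
      qed
    qed
  qed
  show ?thesis unfolding mpow_mod_def
    apply (rule CollectI)
    apply (rule exI[of _ b], rule exI[of _ y], rule exI[of _ kk])
    using yY kk1 kk2 3 by simp
qed


lemma BX_diff: "x \<in> BX m \<Longrightarrow> y \<in> BX m \<Longrightarrow> (\<lambda>i. x i - y i) \<in> BX m"
proof -
  assume x: "x \<in> BX m" and y: "y \<in> BX m"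
  show ?thesis unfolding BX_def
  proof (intro CollectI allI)
    fix K
    have "{i. x i - y i \<notin> idpow m K} \<subseteq> {i. x i \<notin> idpow m K} \<union> {i. y i \<notin> idpow m K}"
      using ideal_diff[OF idpow_ideal] by blast
    moreover have "finite ({i. x i \<notin> idpow m K} \<union> {i. y i \<notin> idpow m K})"
      using x y unfolding BX_def by blast
    ultimately show "finite {i. x i - y i \<notin> idpow m K}" by (rule finite_subset)
  qed
qed

lemma incl_BX: "emb 0 = 0 \<Longrightarrow> v \<in> Xsp \<Longrightarrow> incl emb v \<in> BX m"
  unfolding BX_def Xsp_def incl_def
proof (intro CollectI allI)
  fix K assume e0: "emb 0 = 0" and v: "v \<in> {x. finite {i. x i \<noteq> 0}}"
  have "{i. emb (v i) \<notin> idpow m K} \<subseteq> {i. v i \<noteq> 0}" using e0 by auto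
  then show "finite {i. emb (v i) \<notin> idpow m K}" using v finite_subset by auto
qed

lemma setaddI: "a \<in> A \<Longrightarrow> c \<in> C \<Longrightarrow> x = (\<lambda>i. a i + c i) \<Longrightarrow> x \<in> setadd A C"
  unfolding setadd_def by blast

lemma setaddE: assumes "x \<in> setadd A C" obtains a c where "a \<in> A" "c \<in> C" "x = (\<lambda>i. a i + c i)"
  using assms unfolding setadd_def by blast

theorem proposition2p32:
  fixes emb :: "complex \<Rightarrow> 'b::comm_ring_1" and m :: "'b set"
    and V :: "('i \<Rightarrow> complex) set" and M :: "('i \<Rightarrow> 'b) set" and k :: nat
  assumes "deformation_base emb m"
    and "lin_subspace V"
    and "B_submodule m M" and "pseudoclosed m M"
  shows "mpow_mod m k M \<inter>
           setadd (mpow_mod m k (incl emb ` V)) (mpow_mod m (Suc k) (incl emb ` Xsp))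
         \<subseteq> setadd (mpow_mod m k (M \<inter> setadd (incl emb ` V) (mpow_mod m 1 (incl emb ` Xsp))))
                  (mpow_mod m (Suc k) M)"
proof (rule subsetI)
  note DB = assms(1)[unfolded deformation_base_def]
  have e1: "emb 1 = 1" using DB by (elim conjE)
  have eadd: "\<forall>a c. emb (a + c) = emb a + emb c" using DB by (elim conjE)
  have emul: "\<forall>a c. emb (a * c) = emb a * emb c" using DB by (elim conjE)
  have mid: "is_ideal m" using DB by (elim conjE)
  have res1: "\<forall>b. \<exists>!c. b - emb c \<in> m" using DB by (elim conjE)
  have noeth: "noetherian_ring TYPE('b)" using DB by (elim conjE)
  have sep: "(\<Inter>k. idpow m k) = {0}" using DB by (elim conjE)
  have res: "\<forall>b. \<exists>c. b - emb c \<in> m" using res1 by blast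
  have e0: "emb 0 = 0" by (rule emb_0[OF eadd])
  have V: "V \<subseteq> Xsp" "(\<lambda>i. 0) \<in> V" "\<And>x y. x \<in> V \<Longrightarrow> y \<in> V \<Longrightarrow> (\<lambda>i. x i + y i) \<in> V"
    "\<And>c x. x \<in> V \<Longrightarrow> (\<lambda>i. c * x i) \<in> V"
    using assms(2) unfolding lin_subspace_def by (elim conjE; blast)+
  have M: "M \<subseteq> BX m" "(\<lambda>i. 0) \<in> M" "\<And>x y. x \<in> M \<Longrightarrow> y \<in> M \<Longrightarrow> (\<lambda>i. x i + y i) \<in> M"
    "\<And>r x. x \<in> M \<Longrightarrow> (\<lambda>i. r * x i) \<in> M"
    using assms(3) unfolding B_submodule_def by (elim conjE; blast)+
  fix s assume "s \<in> mpow_mod m k M \<inter>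
           setadd (mpow_mod m k (incl emb ` V)) (mpow_mod m (Suc k) (incl emb ` Xsp))"
  then have sM: "s \<in> mpow_mod m k M" and sA: "s \<in> setadd (mpow_mod m k (incl emb ` V)) (mpow_mod m (Suc k) (incl emb ` Xsp))"
    by auto
  from sA obtain a c where a: "a \<in> mpow_mod m k (incl emb ` V)"
    and c: "c \<in> mpow_mod m (Suc k) (incl emb ` Xsp)" and sac: "s = (\<lambda>i. a i + c i)"
    by (rule setaddE)
  obtain F0 where "spans emb m k F0" using spans_exists[OF eadd res noeth] by blast
  then obtain F where sp: "spans emb m k F" and min: "\<And>F'. spans emb m k F' \<Longrightarrow> card F \<le> card F'"
    using ex_has_least_nat[of "spans emb m k" F0 card] by blast
  have finF: "finite F" and Fk: "F \<subseteq> idpow m k" using sp unfolding spans_def by blast+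
  obtain z where zM: "\<And>g. z g \<in> M" and r1: "(\<lambda>i. s i - (\<Sum>g\<in>F. g * z g i)) \<in> mpow_mod m (Suc k) M"
    using decomp[OF sp M(2) M(3) M(4) sM] by blast
  have YV0: "(\<lambda>i. 0) \<in> incl emb ` V"
  proof -
    have "(\<lambda>i. 0) = incl emb (\<lambda>i. 0)" by (simp add: incl_def e0)
    then show ?thesis using V(2) by blast
  qed
  have YVadd: "(\<lambda>i. x i + y i) \<in> incl emb ` V" if xy: "x \<in> incl emb ` V" "y \<in> incl emb ` V" for x y
  proof -
    obtain v1 v2 where "v1 \<in> V" "v2 \<in> V" "x = incl emb v1" "y = incl emb v2" using xy by blast
    moreover have "(\<lambda>i. incl emb v1 i + incl emb v2 i) = incl emb (\<lambda>i. v1 i + v2 i)"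
      by (simp add: incl_def eadd)
    ultimately show ?thesis using V(3) by auto
  qed
  have YVsc: "(\<lambda>i. emb c * x i) \<in> incl emb ` V" if xx: "x \<in> incl emb ` V" for x c
  proof -
    obtain v where "v \<in> V" "x = incl emb v" using xx by blast
    moreover have "(\<lambda>i. emb c * incl emb v i) = incl emb (\<lambda>i. c * v i)"
      by (simp add: incl_def emul)
    ultimately show ?thesis using V(4) by auto
  qed
  obtain w where wV: "\<And>g. w g \<in> incl emb ` V"
    and r2: "(\<lambda>i. a i - (\<Sum>g\<in>F. g * w g i)) \<in> mpow_mod m (Suc k) (incl emb ` V)"
    using decomp[OF sp YV0 YVadd YVsc a] by blast
  have zw: "(\<Sum>g\<in>F. g * (z g i - w g i)) \<in> idpow m (Suc k)" for i
  proof -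
    have "(\<Sum>g\<in>F. g * (z g i - w g i)) = c i - (s i - (\<Sum>g\<in>F. g * z g i)) + (a i - (\<Sum>g\<in>F. g * w g i))"
      using sac by (simp add: sum_subtractf right_diff_distrib algebra_simps)
    also have "\<dots> \<in> idpow m (Suc k)"
      using ideal_add[OF idpow_ideal ideal_diff[OF idpow_ideal coord_in[OF c, of i] coord_in[OF r1, of i]]
          coord_in[OF r2, of i]] by simp
    finally show ?thesis .
  qed
  have "\<forall>g i. \<exists>d. z g i - w g i - emb d \<in> m" using res by blast
  then obtain dd where dd: "\<And>g i. z g i - w g i - emb (dd g i) \<in> m" by metis
  have zwm: "z g i - w g i \<in> m" if g: "g \<in> F" for g i
  proof -
    have "(\<Sum>g\<in>F. emb (dd g i) * g) = (\<Sum>g\<in>F. g * (z g i - w g i)) - (\<Sum>g\<in>F. (z g i - w g i - emb (dd g i)) * g)"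
      by (simp add: sum_subtractf[symmetric] algebra_simps)
    also have "\<dots> \<in> idpow m (Suc k)"
    proof (intro ideal_diff[OF idpow_ideal] zw ideal_sum[OF idpow_ideal])
      fix g assume "g \<in> F"
      then have "g \<in> idpow m k" using Fk by blast
      then show "(z g i - w g i - emb (dd g i)) * g \<in> idpow m (Suc k)" using dd by (rule idpow_mult[rotated])
    qed
    finally have "dd g i = 0" using spans_indep[OF eadd emul sp, of "\<lambda>g. dd g i" g] min g by blast
    then show ?thesis using dd[of g i] e0 by simp
  qed
  have zin: "z g \<in> M \<inter> setadd (incl emb ` V) (mpow_mod m 1 (incl emb ` Xsp))" if g: "g \<in> F" for g
  proof -
    obtain v where v: "v \<in> V" "w g = incl emb v" using wV[of g] by blast
    have "v \<in> Xsp" using v(1) V(1) by blast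
    then have wBX: "w g \<in> BX m" unfolding v(2) by (rule incl_BX[of emb, OF e0])
    have "z g \<in> BX m" using zM[of g] M(1) by blast
    then have DBX: "(\<lambda>i. z g i - w g i) \<in> BX m" using wBX by (rule BX_diff)
    have D: "(\<lambda>i. z g i - w g i) \<in> mpow_mod m 1 (incl emb ` Xsp)"
      by (rule mX[OF e0 e1 sep DBX]) (rule m_sub_idpow1[OF zwm[OF g]])
    have "z g = (\<lambda>i. w g i + (\<lambda>i. z g i - w g i) i)" by simp
    then have "z g \<in> setadd (incl emb ` V) (mpow_mod m 1 (incl emb ` Xsp))"
      by (rule setaddI[OF wV[of g] D])
    then show ?thesis using zM by blast
  qed
  have zero_in: "(\<lambda>i. 0) \<in> M \<inter> setadd (incl emb ` V) (mpow_mod m 1 (incl emb ` Xsp))"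
  proof -
    have "(\<lambda>i::'i. 0::'b) \<in> BX m" unfolding BX_def by simp
    then have "(\<lambda>i::'i. 0::'b) \<in> mpow_mod m 1 (incl emb ` Xsp)"
      by (rule mX[OF e0 e1 sep]) (rule idpow_0)
    moreover have "(\<lambda>i::'i. 0::'b) = (\<lambda>i. (\<lambda>i. 0) i + (\<lambda>i. 0) i)" by simp
    ultimately have "(\<lambda>i::'i. 0::'b) \<in> setadd (incl emb ` V) (mpow_mod m 1 (incl emb ` Xsp))"
      by (rule setaddI[OF YV0])
    then show ?thesis using M(2) by blast
  qed
  have P: "(\<lambda>i. \<Sum>g\<in>F. g * z g i) \<in> mpow_mod m k (M \<inter> setadd (incl emb ` V) (mpow_mod m 1 (incl emb ` Xsp)))"
  proof (rule finite_set_in_mpow[OF finF _ zero_in])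
    fix g assume "g \<in> F" then show "g \<in> idpow m k \<and> z g \<in> M \<inter> setadd (incl emb ` V) (mpow_mod m 1 (incl emb ` Xsp))"
      using Fk zin[of g] by auto
  qed
  have "s = (\<lambda>i. (\<lambda>i. \<Sum>g\<in>F. g * z g i) i + (\<lambda>i. s i - (\<Sum>g\<in>F. g * z g i)) i)" by simp
  then show "s \<in> setadd (mpow_mod m k (M \<inter> setadd (incl emb ` V) (mpow_mod m 1 (incl emb ` Xsp))))
                  (mpow_mod m (Suc k) M)"
    by (rule setaddI[OF P r1])
qed

end
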